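(* Consider the blown-up Kolmogorov-flow system described in the context. Substitute the expansions $\bar u=\sum_{j\ge0}u^{(j)}r^j$, $\bar v=\sum_{j\ge0}v^{(j)}r^j$, $\bar p=r\sum_{j\ge0}p^{(j)}r^j$ (all functions of $(\bar x,y,\bar t)$, $2\pi$-periodic in $y\in(-\pi,\pi)$, with $\int_{-\pi}^\pi u^{(j)}dy=0$) into the equations and match powers of $r$, treating $r^{-1}\partial_{\bar t}r$ and $\bar{\mathcal R}(\bar t)$ as order one. Then at leading order $v^{(0)}=A(\bar x,\bar t)$ and $u^{(0)}=-\sqrt2\cos y\,A(\bar x,\bar t)$ for a real function $A$, i.e. $(u^{(0)},v^{(0)})=A\boldsymbol\varphi$ with $\boldsymbol\varphi=(-\sqrt2\cos y,1)^\top$, and a necessary condition for solvability (periodicity in $y$ of $p^{(3)}$) of the order-$r^3$ pressure equation is that $$\partial_{\bar t}A=-r(\bar t)^{-1}\partial_{\bar t}r(\bar t)\,A-3\partial_{\bar x}^4A-\sqrt2\,\bar{\mathcal R}(\bar t)\partial_{\bar x}^2A+\tfrac23\partial_{\bar x}^2(A^3).$$ Consequently, in charts (with $\beta=4$): $\mathcal K_1:\ \partial_{t_1}A_1=\tfrac{\varepsilon_1(t_1)}{2}A_1-3\partial_{x_1}^4A_1+\sqrt2\partial_{x_1}^2A_1+\tfrac23\partial_{x_1}^2(A_1^3)$; $\mathcal K_2:\ \partial_{t_2}A_2=-3\partial_{x_2}^4A_2-\sqrt2\mathcal R_2(t_2)\partial_{x_2}^2A_2+\tfrac23\partial_{x_2}^2(A_2^3)$;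 $\mathcal K_3:\ \partial_{t_3}A_3=-\tfrac{\varepsilon_3(t_3)}{2}A_3-3\partial_{x_3}^4A_3-\sqrt2\partial_{x_3}^2A_3+\tfrac23\partial_{x_3}^2(A_3^3)$, with $\varepsilon_1(t_1)=\frac{2\varepsilon_1(0)}{2-6\varepsilon_1(0)t_1}$, $\mathcal R_2(t_2)=\mathcal R_2(0)+t_2$, $\varepsilon_3(t_3)=\frac{2\varepsilon_3(0)}{2+6\varepsilon_3(0)t_3}$.
   Context: The underlying problem is the planar incompressible Navier–Stokes flow with Kolmogorov forcing and slowly increasing Reynolds number, on $(x,y)\in\mathbb R\times(-\pi,\pi)$ with periodic boundary conditions in $y$: for the perturbation $\mathbf U'=(u',v')$ of the basic flow $(\mathcal R\sin y,0)$ and pressure perturbation $p'$, $\partial_t\mathbf U'=-(\mathbf U'\cdot\nabla)\mathbf U'-\nabla p'+\Delta\mathbf U'-(\mathcal R'+\sqrt2)W\mathbf U'+\varepsilon(-\sin y,0)^\top$, $\dot{\mathcal R}'=\varepsilon$, where $W=\begin{pmatrix}\sin y\,\partial_x&\cos y\\0&\sin y\,\partial_x\end{pmatrix}$, $\mathcal R'=\mathcal R-\sqrt2$, with $\nabla\cdot\mathbf U'=0$ and zero mean flow $\int_{-\pi}^\pi u'\,dy=0$. The blow-up (with $\beta=4$) is $(\mathbf U',p')=r(\bar t)(\bar u,\bar v,\bar p)(\bar x,y,\bar t)$, $\mathcal R'=r^2\bar{\mathcal R}$, $\varepsilon=r^6\bar\varepsilon$, $(\bar{\mathcal R},\bar\varepsilon)\in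 S^1$, $\partial_x=r\partial_{\bar x}$, $\partial_t=r^4\partial_{\bar t}$ ($y$ is not rescaled). The resulting blown-up equations are $\partial_y\bar v=-r\partial_{\bar x}\bar u$, $\partial_y^2\bar u=\sqrt2\cos y\,\bar v+(\sqrt2\sin y\,\partial_{\bar x}\bar u+\bar v\partial_y\bar u)r+(\bar u\partial_{\bar x}\bar u-\partial_{\bar x}^2\bar u+\partial_{\bar x}\bar p+\bar{\mathcal R}\bar v\cos y)r^2+\bar{\mathcal R}\sin y\,\partial_{\bar x}\bar u\,r^3+(\partial_{\bar t}\bar u+r^{-1}\bar u\partial_{\bar t}r)r^4+\bar\varepsilon\sin y\,r^5$, $\partial_y\bar p=-\partial^2_{\bar xy}\bar u-\sqrt2\sin y\,\partial_{\bar x}\bar v-\bar v\partial_y\bar v+(-\bar u\partial_{\bar x}\bar v+\partial_{\bar x}^2\bar v)r-\bar{\mathcal R}\sin y\,\partial_{\bar x}\bar v\,r^2-(\partial_{\bar t}\bar v+\bar vr^{-1}\partial_{\bar t}r)r^3$, together with $\int_{-\pi}^\pi\bar u\,dy=0$. Charts: $\mathcal K_1$: $\bar{\mathcal R}=-1$, $\varepsilon=r_1^6\varepsilon_1$, $\dot r_1=-\tfrac12r_1\varepsilon_1$, $\dot\varepsilon_1=3\varepsilon_1^2$; $\mathcal K_2$: $\bar\varepsilon=1$, $\mathcal R'=r_2^2\mathcal R_2$, $\dot r_2=0$, $\dot{\mathcal R}_2=1$; $\mathcal K_3$: $\bar{\mathcal R}=1$, $\varepsilon=r_3^6\varepsilon_3$,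 $\dot r_3=\tfrac12r_3\varepsilon_3$, $\dot\varepsilon_3=-3\varepsilon_3^2$; $t_l,x_l,A_l$ denote desingularized time, space and amplitude in chart $\mathcal K_l$. *)

theory Defs
  imports "HOL-Analysis.Analysis"
begin

text \<open>Fields on (x, y, t) in R x R x T: first argument is the rescaled
  horizontal variable xbar, second the (unrescaled, 2pi-periodic) y, third
  the rescaled time tbar.\<close>

type_synonym fld = "real \<Rightarrow> real \<Rightarrow> real \<Rightarrow> real"

definition Dx :: "fld \<Rightarrow> fld" where
  "Dx f = (\<lambda>x y t. deriv (\<lambda>\<xi>. f \<xi> y t) x)"

definition Dy :: "fld \<Rightarrow> fld" where
  "Dy f = (\<lambda>x y t. deriv (\<lambda>\<eta>. f x \<eta> t) y)"

definition Dt :: "fld \<Rightarrow> fld" where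
  "Dt f = (\<lambda>x y t. deriv (\<lambda>\<tau>. f x y \<tau>) t)"

fun iterD :: "nat list \<Rightarrow> fld \<Rightarrow> fld" where
  "iterD [] f = f"
| "iterD (d # ds) f = (if d = 0 then Dx else if d = 1 then Dy else Dt) (iterD ds f)"

definition smooth3 :: "real set \<Rightarrow> fld \<Rightarrow> bool" where
  "smooth3 T f \<longleftrightarrow>
     (\<forall>ds. continuous_on (UNIV \<times> UNIV \<times> T) (\<lambda>(x, y, t). iterD ds f x y t) \<and>
        (\<forall>x y t. t \<in> T \<longrightarrow>
            (\<lambda>\<xi>. iterD ds f \<xi> y t) differentiable (at x) \<and>
            (\<lambda>\<eta>. iterD ds f x \<eta> t) differentiable (at y) \<and>
            (\<lambda>\<tau>. iterD ds f x y \<tau>) differentiable (at t)))"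

definition lag :: "(nat \<Rightarrow> fld) \<Rightarrow> nat \<Rightarrow> nat \<Rightarrow> fld" where
  "lag f j k = (if k \<le> j then f (j - k) else (\<lambda>x y t. 0))"

text \<open>The hierarchy obtained by inserting ubar = sum u^(j) r^j, vbar = sum v^(j) r^j,
  pbar = r sum p^(j) r^j into the blown-up equations and matching the coefficient of
  r^j, with rho = r^{-1} d r/dtbar, Rb = Rbar(tbar), eb = epsbar(tbar) treated as
  order one.  (Continuity equation, u-equation, pressure equation.)\<close>
definition kf_hierarchy ::
  "real set \<Rightarrow> (real \<Rightarrow> real) \<Rightarrow> (real \<Rightarrow> real) \<Rightarrow> (real \<Rightarrow> real)
   \<Rightarrow> (nat \<Rightarrow> fld) \<Rightarrow> (nat \<Rightarrow> fld) \<Rightarrow> (nat \<Rightarrow> fld) \<Rightarrow> bool" where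
  "kf_hierarchy T r Rb eb u v p \<longleftrightarrow>
     (\<forall>t\<in>T. r t > 0 \<and> r differentiable (at t)) \<and>
     (\<forall>j. smooth3 T (u j) \<and> smooth3 T (v j) \<and> smooth3 T (p j)) \<and>
     (\<forall>j x y t. t \<in> T \<longrightarrow>
        u j x (y + 2 * pi) t = u j x y t \<and>
        v j x (y + 2 * pi) t = v j x y t \<and>
        p j x (y + 2 * pi) t = p j x y t) \<and>
     (\<forall>j x t. t \<in> T \<longrightarrow> integral {-pi..pi} (\<lambda>y. u j x y t) = 0) \<and>
     (\<forall>j x y t. t \<in> T \<longrightarrow>
        Dy (v j) x y t = - Dx (lag u j 1) x y t \<and>
        Dy (Dy (u j)) x y t =
            sqrt 2 * cos y * v j x y t
          + sqrt 2 * sin y * Dx (lag u j 1) x y t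
          + (\<Sum>k<j. v k x y t * Dy (u (j - 1 - k)) x y t)
          + (\<Sum>k<j - 1. u k x y t * Dx (u (j - 2 - k)) x y t)
          - Dx (Dx (lag u j 2)) x y t
          + Dx (lag p j 2) x y t
          + Rb t * lag v j 2 x y t * cos y
          + Rb t * sin y * Dx (lag u j 3) x y t
          + (Dt (lag u j 4) x y t + lag u j 4 x y t * (deriv r t / r t))
          + (if j = 5 then eb t * sin y else 0) \<and>
        Dy (p j) x y t =
            - Dy (Dx (u j)) x y t
          - sqrt 2 * sin y * Dx (v j) x y t
          - (\<Sum>k\<le>j. v k x y t * Dy (v (j - k)) x y t)
          + (- (\<Sum>k<j. u k x y t * Dx (v (j - 1 - k)) x y t) + Dx (Dx (lag v j 1)) x y t)
          - Rb t * sin y * Dx (lag v j 2) x y t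
          - (Dt (lag v j 3) x y t + lag v j 3 x y t * (deriv r t / r t)))"

definition leading_order :: "real set \<Rightarrow> (nat \<Rightarrow> fld) \<Rightarrow> (nat \<Rightarrow> fld) \<Rightarrow> (real \<Rightarrow> real \<Rightarrow> real) \<Rightarrow> bool" where
  "leading_order T u v A \<longleftrightarrow>
     (\<forall>x y t. t \<in> T \<longrightarrow> v 0 x y t = A x t \<and> u 0 x y t = - sqrt 2 * cos y * A x t)"

end

theory Submission
  imports Defs
begin


lemma smooth_dx:
  assumes "smooth3 T f" "t \<in> T"
  shows "((\<lambda>\<xi>. iterD ds f \<xi> y t) has_real_derivative iterD (0#ds) f x y t) (at x)"
proof -
  have "(\<lambda>\<xi>. iterD ds f \<xi> y t) differentiable (at x)" using assms unfolding smooth3_def by blast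
  then show ?thesis by (simp add: DERIV_deriv_iff_real_differentiable[symmetric] Dx_def)
qed

lemma smooth_dy:
  assumes "smooth3 T f" "t \<in> T"
  shows "((\<lambda>\<eta>. iterD ds f x \<eta> t) has_real_derivative iterD (1#ds) f x y t) (at y)"
proof -
  have "(\<lambda>\<eta>. iterD ds f x \<eta> t) differentiable (at y)" using assms unfolding smooth3_def by blast
  then show ?thesis by (simp add: DERIV_deriv_iff_real_differentiable[symmetric] Dy_def)
qed

lemma smooth_dt:
  assumes "smooth3 T f" "t \<in> T"
  shows "((\<lambda>\<tau>. iterD ds f x y \<tau>) has_real_derivative iterD (2#ds) f x y t) (at t)"
proof -
  have "(\<lambda>\<tau>. iterD ds f x y \<tau>) differentiable (at t)" using assms unfolding smooth3_def by blast
  then show ?thesis by (simp add: DERIV_deriv_iff_real_differentiable[symmetric] Dt_def)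
qed

lemma Dx_eq:
  assumes "\<And>\<xi>. f \<xi> y t = F \<xi>" "(F has_real_derivative D) (at x)"
  shows "Dx f x y t = D"
proof -
  have "(\<lambda>\<xi>. f \<xi> y t) = F" using assms(1) by auto
  then show ?thesis unfolding Dx_def using assms(2) by (simp add: DERIV_imp_deriv)
qed

lemma Dy_eq:
  assumes "\<And>\<eta>. f x \<eta> t = F \<eta>" "(F has_real_derivative D) (at y)"
  shows "Dy f x y t = D"
proof -
  have "(\<lambda>\<eta>. f x \<eta> t) = F" using assms(1) by auto
  then show ?thesis unfolding Dy_def using assms(2) by (simp add: DERIV_imp_deriv)
qed

lemma Dx_zero[simp]: "Dx (\<lambda>x y t. 0) = (\<lambda>x y t. 0)" by (simp add: Dx_def)
lemma Dt_zero[simp]: "Dt (\<lambda>x y t. 0) = (\<lambda>x y t. 0)" by (simp add: Dt_def)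

lemma funpow_deriv: "(deriv ^^ n) (\<lambda>\<xi>. f \<xi> y t) = (\<lambda>\<xi>. iterD (replicate n 0) f \<xi> y t)"
  by (induction n) (auto simp: Dx_def)

lemma ode1:
  fixes g :: "real \<Rightarrow> real"
  assumes d: "\<And>\<eta>. (g has_real_derivative (a * cos \<eta> + b * sin \<eta> + c)) (at \<eta>)"
    and per: "g (2*pi) = g 0"
  shows "c = 0" "g y = a * sin y - b * cos y + (g 0 + b)"
proof -
  define h where "h \<eta> = g \<eta> - a * sin \<eta> + b * cos \<eta> - c * \<eta>" for \<eta>
  have hd: "(h has_real_derivative 0) (at \<eta>)" for \<eta>
    unfolding h_def[abs_def]
    by (auto intro!: derivative_eq_intros d)
  have hc: "h z = h 0" for z using DERIV_isconst_all hd by blast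
  from hc[of "2*pi"] per show c0: "c = 0" by (simp add: h_def)
  from hc[of y] c0 show "g y = a * sin y - b * cos y + (g 0 + b)" by (simp add: h_def)
qed

lemma ftc_real:
  fixes F f :: "real \<Rightarrow> real"
  assumes "a \<le> b" "\<And>x. (F has_real_derivative f x) (at x)"
  shows "(f has_integral (F b - F a)) {a..b}"
  apply (rule fundamental_theorem_of_calculus[OF assms(1)])
  using assms(2) by (simp add: has_real_derivative_iff_has_vector_derivative[symmetric] has_field_derivative_at_within)

lemma ode2:
  fixes g g' :: "real \<Rightarrow> real"
  assumes d1: "\<And>\<eta>. (g has_real_derivative g' \<eta>) (at \<eta>)"
    and d2: "\<And>\<eta>. (g' has_real_derivative (a * cos \<eta> + b * sin \<eta> + c)) (at \<eta>)"
    and per: "\<And>y. g (y + 2*pi) = g y"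
    and int: "(g has_integral 0) {-pi..pi}"
  shows "g y = - a * cos y - b * sin y"
proof -
  have "((\<lambda>\<eta>. g (\<eta> + 2*pi)) has_real_derivative g' (0 + 2*pi) * 1) (at 0)"
    by (rule DERIV_chain2[OF d1]) (auto intro!: derivative_eq_intros)
  moreover have "(\<lambda>\<eta>. g (\<eta> + 2*pi)) = g" using per by auto
  ultimately have "(g has_real_derivative g' (2*pi)) (at 0)" by simp
  with d1[of 0] have p1: "g' (2*pi) = g' 0" using DERIV_unique by blast
  note o1 = ode1[OF d2 p1]
  define K where "K = g' 0 + b"
  have d3: "(g has_real_derivative ((-b) * cos \<eta> + a * sin \<eta> + K)) (at \<eta>)" for \<eta>
    using d1[of \<eta>] o1(2)[of \<eta>] by (simp add: K_def)
  have p2: "g (2*pi) = g 0" using per[of 0] by simp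
  note o2 = ode1[OF d3 p2]
  define M where "M = g 0 + a"
  have gf: "g z = M - a * cos z - b * sin z" for z using o2(2)[of z] by (simp add: M_def)
  have "((\<lambda>z. M - a * cos z - b * sin z) has_integral
      ((M * pi - a * sin pi + b * cos pi) - (M * (-pi) - a * sin (-pi) + b * cos (-pi)))) {-pi..pi}"
    by (rule ftc_real) (auto intro!: derivative_eq_intros)
  moreover have "g = (\<lambda>z. M - a * cos z - b * sin z)" using gf by auto
  ultimately have "(g has_integral 2 * pi * M) {-pi..pi}" by (simp add: algebra_simps)
  with int have "2 * pi * M = 0" using has_integral_unique by blast
  then have "M = 0" by simp
  then show ?thesis using gf by simp
qed

definition trl :: "(real \<Rightarrow> real) \<Rightarrow> bool" where
  "trl f \<longleftrightarrow> (\<exists>a b c. \<forall>y. f y = a + b * cos y + c * sin y)"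
definition trq :: "(real \<Rightarrow> real) \<Rightarrow> bool" where
  "trq f \<longleftrightarrow> (\<exists>a b c d e g. \<forall>y. f y = a + b * cos y + c * sin y + d * (cos y)^2 + e * (sin y)^2 + g * (sin y * cos y))"

lemma trl_I: "(\<And>y. f y = a + b * cos y + c * sin y) \<Longrightarrow> trl f"
  unfolding trl_def by blast
lemma trq_I: "(\<And>y. f y = a + b * cos y + c * sin y + d * (cos y)^2 + e * (sin y)^2 + h * (sin y * cos y)) \<Longrightarrow> trq f"
  unfolding trq_def by blast

lemma trl_const: "trl (\<lambda>y. k)" by (rule trl_I[of _ k 0 0]) simp
lemma trl_cos: "trl (\<lambda>y. cos y)" by (rule trl_I[of _ 0 1 0]) simp
lemma trl_sin: "trl (\<lambda>y. sin y)" by (rule trl_I[of _ 0 0 1]) simp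
lemma trl_add: assumes "trl f" "trl g" shows "trl (\<lambda>y. f y + g y)"
proof -
  obtain a b c where f: "\<And>y. f y = a + b * cos y + c * sin y" using assms(1) unfolding trl_def by blast
  obtain a' b' c' where g: "\<And>y. g y = a' + b' * cos y + c' * sin y" using assms(2) unfolding trl_def by blast
  show ?thesis by (rule trl_I[of _ "a+a'" "b+b'" "c+c'"]) (simp add: f g algebra_simps)
qed
lemma trl_diff: assumes "trl f" "trl g" shows "trl (\<lambda>y. f y - g y)"
proof -
  obtain a b c where f: "\<And>y. f y = a + b * cos y + c * sin y" using assms(1) unfolding trl_def by blast
  obtain a' b' c' where g: "\<And>y. g y = a' + b' * cos y + c' * sin y" using assms(2) unfolding trl_def by blast
  show ?thesis by (rule trl_I[of _ "a-a'" "b-b'" "c-c'"]) (simp add: f g algebra_simps)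
qed
lemma trl_minus: assumes "trl f" shows "trl (\<lambda>y. - f y)"
proof -
  obtain a b c where f: "\<And>y. f y = a + b * cos y + c * sin y" using assms(1) unfolding trl_def by blast
  show ?thesis by (rule trl_I[of _ "-a" "-b" "-c"]) (simp add: f algebra_simps)
qed
lemma trl_cmult: assumes "trl f" shows "trl (\<lambda>y. k * f y)"
proof -
  obtain a b c where f: "\<And>y. f y = a + b * cos y + c * sin y" using assms(1) unfolding trl_def by blast
  show ?thesis by (rule trl_I[of _ "k*a" "k*b" "k*c"]) (simp add: f algebra_simps)
qed
lemma trl_multc: assumes "trl f" shows "trl (\<lambda>y. f y * k)"
proof -
  obtain a b c where f: "\<And>y. f y = a + b * cos y + c * sin y" using assms(1) unfolding trl_def by blast
  show ?thesis by (rule trl_I[of _ "k*a" "k*b" "k*c"]) (simp add: f algebra_simps)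
qed

lemma trq_trl: assumes "trl f" shows "trq f"
proof -
  obtain a b c where f: "\<And>y. f y = a + b * cos y + c * sin y" using assms(1) unfolding trl_def by blast
  show ?thesis by (rule trq_I[of _ a b c 0 0 0]) (simp add: f)
qed
lemma trq_add: assumes "trq f" "trq g" shows "trq (\<lambda>y. f y + g y)"
proof -
  obtain a b c d e h where f: "\<And>y. f y = a + b * cos y + c * sin y + d * (cos y)^2 + e * (sin y)^2 + h * (sin y * cos y)"
    using assms(1) unfolding trq_def by blast
  obtain a' b' c' d' e' h' where g: "\<And>y. g y = a' + b' * cos y + c' * sin y + d' * (cos y)^2 + e' * (sin y)^2 + h' * (sin y * cos y)"
    using assms(2) unfolding trq_def by blast
  show ?thesis by (rule trq_I[of _ "a+a'" "b+b'" "c+c'" "d+d'" "e+e'" "h+h'"]) (simp add: f g algebra_simps)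
qed
lemma trq_diff: assumes "trq f" "trq g" shows "trq (\<lambda>y. f y - g y)"
proof -
  obtain a b c d e h where f: "\<And>y. f y = a + b * cos y + c * sin y + d * (cos y)^2 + e * (sin y)^2 + h * (sin y * cos y)"
    using assms(1) unfolding trq_def by blast
  obtain a' b' c' d' e' h' where g: "\<And>y. g y = a' + b' * cos y + c' * sin y + d' * (cos y)^2 + e' * (sin y)^2 + h' * (sin y * cos y)"
    using assms(2) unfolding trq_def by blast
  show ?thesis by (rule trq_I[of _ "a-a'" "b-b'" "c-c'" "d-d'" "e-e'" "h-h'"]) (simp add: f g algebra_simps)
qed
lemma trq_minus: assumes "trq f" shows "trq (\<lambda>y. - f y)"
proof -
  obtain a b c d e h where f: "\<And>y. f y = a + b * cos y + c * sin y + d * (cos y)^2 + e * (sin y)^2 + h * (sin y * cos y)"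
    using assms(1) unfolding trq_def by blast
  show ?thesis by (rule trq_I[of _ "-a" "-b" "-c" "-d" "-e" "-h"]) (simp add: f algebra_simps)
qed
lemma trq_cmult: assumes "trq f" shows "trq (\<lambda>y. k * f y)"
proof -
  obtain a b c d e h where f: "\<And>y. f y = a + b * cos y + c * sin y + d * (cos y)^2 + e * (sin y)^2 + h * (sin y * cos y)"
    using assms(1) unfolding trq_def by blast
  show ?thesis by (rule trq_I[of _ "k*a" "k*b" "k*c" "k*d" "k*e" "k*h"]) (simp add: f algebra_simps)
qed
lemma trq_mult: assumes "trl f" "trl g" shows "trq (\<lambda>y. f y * g y)"
proof -
  obtain a b c where f: "\<And>y. f y = a + b * cos y + c * sin y" using assms(1) unfolding trl_def by blast
  obtain a' b' c' where g: "\<And>y. g y = a' + b' * cos y + c' * sin y" using assms(2) unfolding trl_def by blast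
  show ?thesis
    by (rule trq_I[of _ "a*a'" "a*b'+b*a'" "a*c'+c*a'" "b*b'" "c*c'" "b*c'+c*b'"])
       (simp add: f g algebra_simps power2_eq_square)
qed

lemma trq_integral:
  assumes "trq f"
  shows "(f has_integral (pi/2 * (f 0 + f pi + f (pi/2) + f (-pi/2)))) {-pi..pi}"
proof -
  obtain a b c d e h where f: "\<And>y. f y = a + b * cos y + c * sin y + d * (cos y)^2 + e * (sin y)^2 + h * (sin y * cos y)"
    using assms unfolding trq_def by blast
  define F where "F y = a * y + b * sin y - c * cos y + d * (y/2 + sin y * cos y / 2)
     + e * (y/2 - sin y * cos y / 2) + h * ((sin y)^2 / 2)" for y
  have "(F has_real_derivative f y) (at y)" for y
  proof -
    have "(F has_real_derivative (a + b * cos y + c * sin y + d * (1/2 + (cos y * cos y - sin y * sin y)/2)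
       + e * (1/2 - (cos y * cos y - sin y * sin y)/2) + h * (sin y * cos y))) (at y)"
      unfolding F_def[abs_def]
      by (auto intro!: derivative_eq_intros simp: power2_eq_square field_simps)
    moreover have "a + b * cos y + c * sin y + d * (1/2 + (cos y * cos y - sin y * sin y)/2)
       + e * (1/2 - (cos y * cos y - sin y * sin y)/2) + h * (sin y * cos y) = f y"
      unfolding f using sin_cos_squared_add[of y] unfolding power2_eq_square by algebra
    ultimately show ?thesis by simp
  qed
  then have "(f has_integral (F pi - F (-pi))) {-pi..pi}" by (intro ftc_real) auto
  moreover have "F pi - F (-pi) = pi/2 * (f 0 + f pi + f (pi/2) + f (-pi/2))"
    unfolding F_def f by (simp add: algebra_simps)
  ultimately show ?thesis by simp
qed


definition Rf :: "real \<Rightarrow> real \<Rightarrow> real \<Rightarrow> real \<Rightarrow> real \<Rightarrow> real \<Rightarrow> real \<Rightarrow> real \<Rightarrow> real \<Rightarrow> real \<Rightarrow> real \<Rightarrow> real \<Rightarrow> real \<Rightarrow> real \<Rightarrow> real \<Rightarrow> real \<Rightarrow> real \<Rightarrow> real \<Rightarrow> real \<Rightarrow> real \<Rightarrow> real" where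
  "Rf s a0 a1 a2 a3 a4 b0 b1 b2 b3 c0 c1 c2 d0 d1 Rb rho At n c = - s * n * ((s * (c2 + 2 * s * (3 * a1 * a2 + a0 * a3)) - 3 * s * (2 * a0 * a1 ^ 2 + a0 ^ 2 * a2) + 3 * s * a4 + Rb * a2) * n - 2 * s * (a2 * b0 + 2 * a1 * b1 + a0 * b2) * c + (d1 + 2 * s * (a2 * b0 + 2 * a1 * b1 + a0 * b2)))  - (a0 * ((s * (c1 + 2 * s * (a1 * a1 + a0 * a2)) - 3 * s * a0 ^ 2 * a1 + 3 * s * a3 + Rb * a1) * c + 2 * s * (a1 * b0 + a0 * b1) * n)     + (s * a1 * n + b0) * (s * b1 * c + 2 * s * a0 * a1 * n)     + (s * b1 * n - 2 * s * a0 * a1 * c + (c0 + 2 * s * a0 * a1)) * (s * a1 * c)     + ((s * (c1 + 2 * s * (a1 * a1 + a0 * a2)) - 3 * s * a0 ^ 2 * a1 + 3 * s * a3 + Rb * a1) * n - 2 * s * (a1 * b0 + a0 * b1) * c + (d0 + 2 * s * (a1 * b0 + a0 * b1))) * 0)  + (- ((- s * a0 * c) * (s * b2 * n - 2 * s * (a1 * a1 + a0 * a2) * c + (c1 + 2 * s * (a1 * a1 + a0 * a2)))       + (- s * b0 * c - s * a0 ^ 2 * n) * (s * a2 * n + b1)       + (- (s * (c0 + 2 * s * a0 * a1) - s * a0 ^ 3 + 3 * s * a2 + Rb * a0) * c - 2 * s * a0 * b0 * n) * a1)     + (s * b3 * n - 2 * s * (3 * a1 * a2 + a0 * a3) * c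 + (c2 + 2 * s * (3 * a1 * a2 + a0 * a3))))  - Rb * n * (s * a2 * n + b1)  - (At + a0 * rho)"

lemma final_alg:
  assumes s2: "s * s = 2" and S: "Rf s a0 a1 a2 a3 a4 b0 b1 b2 b3 c0 c1 c2 d0 d1 Rb rho At 0 1 + Rf s a0 a1 a2 a3 a4 b0 b1 b2 b3 c0 c1 c2 d0 d1 Rb rho At 0 (-1) + Rf s a0 a1 a2 a3 a4 b0 b1 b2 b3 c0 c1 c2 d0 d1 Rb rho At 1 0 + Rf s a0 a1 a2 a3 a4 b0 b1 b2 b3 c0 c1 c2 d0 d1 Rb rho At (-1) 0 = 0"
  shows "At = - rho * a0 - 3 * a4 - s * Rb * a2 + 2 / 3 * (6 * a0 * a1 ^ 2 + 3 * a0 ^ 2 * a2)"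
proof -
  have e: "Rf s a0 a1 a2 a3 a4 b0 b1 b2 b3 c0 c1 c2 d0 d1 Rb rho At 0 1 + Rf s a0 a1 a2 a3 a4 b0 b1 b2 b3 c0 c1 c2 d0 d1 Rb rho At 0 (-1) + Rf s a0 a1 a2 a3 a4 b0 b1 b2 b3 c0 c1 c2 d0 d1 Rb rho At 1 0 + Rf s a0 a1 a2 a3 a4 b0 b1 b2 b3 c0 c1 c2 d0 d1 Rb rho At (-1) 0 = - 4 * (At - (- rho * a0 - 3 * a4 - s * Rb * a2 + 2 / 3 * (6 * a0 * a1 ^ 2 + 3 * a0 ^ 2 * a2))) + (8 * a0 * a1 * a1 + (-4) * a0 * a3 * s + 4 * a0 * a0 * a2 + (-12) * a1 * a2 * s + (-6) * a4 + (-2) * c2) * (s * s - 2)"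
    unfolding Rf_def by (simp add: algebra_simps power2_eq_square power3_eq_cube)
  then have "0 = - 4 * (At - (- rho * a0 - 3 * a4 - s * Rb * a2 + 2 / 3 * (6 * a0 * a1 ^ 2 + 3 * a0 ^ 2 * a2)))"
    unfolding S s2 by simp
  moreover have "\<And>x y::real. 0 = - 4 * (x - y) \<Longrightarrow> x = y" by simp
  ultimately show ?thesis by blast
qed


lemma u2_alg:
  fixes s c n a0 a1 a2 b0 b1 K2 p1 R :: real
  assumes s2: "s * s = 2" and sc: "n * n + c * c = 1"
  shows "s * c * (s * b1 * n - 2 * s * a0 * a1 * c + K2)
      + s * n * (- s * b1 * c - 2 * s * a0 * a1 * n)
      + (a0 * (s * b0 * n - s * (a0)^2 * c)
         + (s * a1 * n + b0) * (s * a0 * n))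
      + (- s * a0 * c) * (- s * a1 * c)
      - (- s * a2 * c)
      + (2 * s * a2 * c + (p1 - 2 * s * a2))
      + R * a0 * c
    = (s * K2 - s * a0 ^ 3 + 3 * s * a2 + R * a0) * c + (2 * s * a0 * b0) * n
      + (p1 - 2 * s * a2 - 2 * a0 * a1)"
proof -
  have e: "(s * c * (s * b1 * n - 2 * s * a0 * a1 * c + K2)
      + s * n * (- s * b1 * c - 2 * s * a0 * a1 * n)
      + (a0 * (s * b0 * n - s * (a0)^2 * c)
         + (s * a1 * n + b0) * (s * a0 * n))
      + (- s * a0 * c) * (- s * a1 * c)
      - (- s * a2 * c)
      + (2 * s * a2 * c + (p1 - 2 * s * a2))
      + R * a0 * c)
    - ((s * K2 - s * a0 ^ 3 + 3 * s * a2 + R * a0) * c + (2 * s * a0 * b0) * n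
      + (p1 - 2 * s * a2 - 2 * a0 * a1))
    = - a0 * a1 * (c * c + n * n) * (s * s - 2) - 2 * a0 * a1 * (n * n + c * c - 1)"
    by (simp add: algebra_simps power2_eq_square power3_eq_cube)
  have "\<And>x y::real. x - y = 0 \<Longrightarrow> x = y" by simp
  moreover have "- a0 * a1 * (c * c + n * n) * (s * s - 2) - 2 * a0 * a1 * (n * n + c * c - 1) = 0"
    unfolding s2 sc by simp
  ultimately show ?thesis using e by metis
qed



lemma ode_zero_aux:
  fixes w k :: "real \<Rightarrow> real"
  assumes ab: "a \<le> b" and d: "\<And>\<tau>. a \<le> \<tau> \<Longrightarrow> \<tau> \<le> b \<Longrightarrow> (w has_real_derivative k \<tau> * w \<tau>) (at \<tau>)"
    and kb: "\<And>\<tau>. a \<le> \<tau> \<Longrightarrow> \<tau> \<le> b \<Longrightarrow> \<bar>k \<tau>\<bar> \<le> M"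
  shows "w a = 0 \<Longrightarrow> w b = 0" and "w b = 0 \<Longrightarrow> w a = 0"
proof -
  define B where "B = 2 * M + 1"
  have kB: "2 * k \<tau> < B" "- B < 2 * k \<tau>" if "a \<le> \<tau>" "\<tau> \<le> b" for \<tau>
    using kb[OF that] unfolding B_def by auto
  {
    assume wa: "w a = 0"
    define z where "z \<tau> = (w \<tau>)^2 * exp (- B * \<tau>)" for \<tau>
    have "\<exists>y. (z has_real_derivative y) (at \<tau>) \<and> y \<le> 0" if "a \<le> \<tau>" "\<tau> \<le> b" for \<tau>
    proof -
      have "(z has_real_derivative (2 * k \<tau> - B) * ((w \<tau>)^2 * exp (- B * \<tau>))) (at \<tau>)"
        unfolding z_def[abs_def]
        by (auto intro!: derivative_eq_intros d[OF that] simp: algebra_simps power2_eq_square)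
      moreover have "(2 * k \<tau> - B) * ((w \<tau>)^2 * exp (- B * \<tau>)) \<le> 0"
        using kB[OF that] by (intro mult_nonpos_nonneg) auto
      ultimately show ?thesis by blast
    qed
    from DERIV_nonpos_imp_nonincreasing[OF ab this] have "z b \<le> z a" by blast
    then have "(w b)^2 * exp (- B * b) \<le> 0" using wa by (simp add: z_def)
    then have "(w b)^2 \<le> 0" by (simp add: mult_le_0_iff)
    then show "w b = 0" by simp
  }
  {
    assume wb: "w b = 0"
    define z where "z \<tau> = (w \<tau>)^2 * exp (B * \<tau>)" for \<tau>
    have "\<exists>y. (z has_real_derivative y) (at \<tau>) \<and> y \<ge> 0" if "a \<le> \<tau>" "\<tau> \<le> b" for \<tau>
    proof -
      have "(z has_real_derivative (2 * k \<tau> + B) * ((w \<tau>)^2 * exp (B * \<tau>))) (at \<tau>)"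
        unfolding z_def[abs_def]
        by (auto intro!: derivative_eq_intros d[OF that] simp: algebra_simps power2_eq_square)
      moreover have "(2 * k \<tau> + B) * ((w \<tau>)^2 * exp (B * \<tau>)) \<ge> 0"
        using kB[OF that] by (intro mult_nonneg_nonneg) auto
      ultimately show ?thesis by blast
    qed
    from DERIV_nonneg_imp_nondecreasing[OF ab this] have "z a \<le> z b" by blast
    then have "(w a)^2 * exp (B * a) \<le> 0" using wb by (simp add: z_def)
    then have "(w a)^2 \<le> 0" by (simp add: mult_le_0_iff)
    then show "w a = 0" by simp
  }
qed

lemma ode_zero:
  fixes w k :: "real \<Rightarrow> real"
  assumes T: "is_interval T" "0 \<in> T" "t \<in> T"
    and d: "\<And>\<tau>. \<tau> \<in> T \<Longrightarrow> (w has_real_derivative k \<tau> * w \<tau>) (at \<tau>)"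
    and kc: "continuous_on T k" and w0: "w 0 = 0"
  shows "w t = 0"
proof -
  define I where "I = {min 0 t..max 0 t}"
  have sub: "I \<subseteq> T"
  proof
    fix \<tau> assume "\<tau> \<in> I"
    then have "min 0 t \<le> \<tau>" "\<tau> \<le> max 0 t" unfolding I_def by auto
    moreover have "min 0 t \<in> T" "max 0 t \<in> T" using T by (auto simp: min_def max_def)
    ultimately show "\<tau> \<in> T" using T(1) unfolding is_interval_1 by blast
  qed
  have "compact (k ` I)" unfolding I_def
    by (rule compact_continuous_image[OF continuous_on_subset[OF kc sub[unfolded I_def]]]) simp
  then have "bounded (k ` I)" by (rule compact_imp_bounded)
  then obtain M where M: "\<And>\<tau>. \<tau> \<in> I \<Longrightarrow> \<bar>k \<tau>\<bar> \<le> M" unfolding bounded_real by auto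
  show ?thesis
  proof (cases "0 \<le> t")
    case True
    have iI: "\<tau> \<in> T" "\<tau> \<in> I" if "0 \<le> \<tau>" "\<tau> \<le> t" for \<tau>
    proof -
      show "\<tau> \<in> I" unfolding I_def using that True by simp
      then show "\<tau> \<in> T" using sub by blast
    qed
    show ?thesis
      by (rule ode_zero_aux(1)[OF True, of w k M, OF d[OF iI(1)] M[OF iI(2)] w0])
  next
    case False
    then have ft: "t \<le> 0" by simp
    have iI: "\<tau> \<in> T" "\<tau> \<in> I" if "t \<le> \<tau>" "\<tau> \<le> 0" for \<tau>
    proof -
      show "\<tau> \<in> I" unfolding I_def using that ft by simp
      then show "\<tau> \<in> T" using sub by blast
    qed
    show ?thesis
      by (rule ode_zero_aux(2)[OF ft, of w k M, OF d[OF iI(1)] M[OF iI(2)] w0])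
  qed
qed



context
  fixes T r Rb eb u v p
  assumes oT: "open T" and H: "kf_hierarchy T r Rb eb u v p"
begin

lemma sm: "smooth3 T (u j)" "smooth3 T (v j)" "smooth3 T (p j)"
  using H unfolding kf_hierarchy_def by auto

lemma per: "t \<in> T \<Longrightarrow> u j x (y + 2*pi) t = u j x y t"
  "t \<in> T \<Longrightarrow> v j x (y + 2*pi) t = v j x y t"
  "t \<in> T \<Longrightarrow> p j x (y + 2*pi) t = p j x y t"
  using H unfolding kf_hierarchy_def by auto

lemma mean_u: "t \<in> T \<Longrightarrow> integral {-pi..pi} (\<lambda>y. u j x y t) = 0"
  using H unfolding kf_hierarchy_def by auto

lemma rpos: "t \<in> T \<Longrightarrow> r t > 0"
  using H unfolding kf_hierarchy_def by auto

lemma eqv: "t \<in> T \<Longrightarrow> Dy (v j) x y t = - Dx (lag u j 1) x y t"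
  using H unfolding kf_hierarchy_def by blast

lemma equ: "t \<in> T \<Longrightarrow> Dy (Dy (u j)) x y t =
            sqrt 2 * cos y * v j x y t
          + sqrt 2 * sin y * Dx (lag u j 1) x y t
          + (\<Sum>k<j. v k x y t * Dy (u (j - 1 - k)) x y t)
          + (\<Sum>k<j - 1. u k x y t * Dx (u (j - 2 - k)) x y t)
          - Dx (Dx (lag u j 2)) x y t
          + Dx (lag p j 2) x y t
          + Rb t * lag v j 2 x y t * cos y
          + Rb t * sin y * Dx (lag u j 3) x y t
          + (Dt (lag u j 4) x y t + lag u j 4 x y t * (deriv r t / r t))
          + (if j = 5 then eb t * sin y else 0)"
  using H unfolding kf_hierarchy_def by blast

lemma eqp: "t \<in> T \<Longrightarrow> Dy (p j) x y t =
            - Dy (Dx (u j)) x y t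
          - sqrt 2 * sin y * Dx (v j) x y t
          - (\<Sum>k\<le>j. v k x y t * Dy (v (j - k)) x y t)
          + (- (\<Sum>k<j. u k x y t * Dx (v (j - 1 - k)) x y t) + Dx (Dx (lag v j 1)) x y t)
          - Rb t * sin y * Dx (lag v j 2) x y t
          - (Dt (lag v j 3) x y t + lag v j 3 x y t * (deriv r t / r t))"
  using H unfolding kf_hierarchy_def by blast

lemma lagz: "k > j \<Longrightarrow> lag f j k = (\<lambda>x y t. 0)" by (simp add: lag_def)
lemma lagn: "k \<le> j \<Longrightarrow> lag f j k = f (j - k)" by (simp add: lag_def)

lemma equ0: "t \<in> T \<Longrightarrow> Dy (Dy (u 0)) x y t = sqrt 2 * cos y * v 0 x y t"
  using equ[of t 0] by (simp add: lagz)
lemma equ1: "t \<in> T \<Longrightarrow> Dy (Dy (u 1)) x y t = sqrt 2 * cos y * v 1 x y t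
   + sqrt 2 * sin y * Dx (u 0) x y t + v 0 x y t * Dy (u 0) x y t"
  using equ[of t 1] by (simp add: lagz lagn)
lemma equ2: "t \<in> T \<Longrightarrow> Dy (Dy (u 2)) x y t = sqrt 2 * cos y * v 2 x y t
   + sqrt 2 * sin y * Dx (u 1) x y t + (v 0 x y t * Dy (u 1) x y t + v 1 x y t * Dy (u 0) x y t)
   + u 0 x y t * Dx (u 0) x y t - Dx (Dx (u 0)) x y t + Dx (p 0) x y t + Rb t * v 0 x y t * cos y"
  using equ[of t 2] by (simp add: lagz lagn numeral_2_eq_2)
lemma eqv0: "t \<in> T \<Longrightarrow> Dy (v 0) x y t = 0"
  using eqv[of t 0] by (simp add: lagz)
lemma eqvs: "t \<in> T \<Longrightarrow> Dy (v (Suc j)) x y t = - Dx (u j) x y t"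
  using eqv[of t "Suc j"] by (simp add: lagn)
lemma eqv1: "t \<in> T \<Longrightarrow> Dy (v 1) x y t = - Dx (u 0) x y t"
  using eqv[of t 1] by (simp add: lagn)
lemma eqv2: "t \<in> T \<Longrightarrow> Dy (v 2) x y t = - Dx (u 1) x y t"
  using eqv[of t 2] by (simp add: lagn)
lemma eqv3: "t \<in> T \<Longrightarrow> Dy (v 3) x y t = - Dx (u 2) x y t"
  using eqv[of t 3] by (simp add: lagn)
lemma eqp0: "t \<in> T \<Longrightarrow> Dy (p 0) x y t = - Dy (Dx (u 0)) x y t
          - sqrt 2 * sin y * Dx (v 0) x y t - v 0 x y t * Dy (v 0) x y t"
  using eqp[of t 0] by (simp add: lagz)
lemma eqp3: "t \<in> T \<Longrightarrow> Dy (p 3) x y t =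
            - Dy (Dx (u 3)) x y t
          - sqrt 2 * sin y * Dx (v 3) x y t
          - (v 0 x y t * Dy (v 3) x y t + v 1 x y t * Dy (v 2) x y t + v 2 x y t * Dy (v 1) x y t + v 3 x y t * Dy (v 0) x y t)
          + (- (u 0 x y t * Dx (v 2) x y t + u 1 x y t * Dx (v 1) x y t + u 2 x y t * Dx (v 0) x y t) + Dx (Dx (v 2)) x y t)
          - Rb t * sin y * Dx (v 1) x y t
          - (Dt (v 0) x y t + v 0 x y t * (deriv r t / r t))"
  using eqp[of t 3] by (simp add: lagz lagn eval_nat_numeral)

lemma v0c: "t \<in> T \<Longrightarrow> v 0 x y t = v 0 x 0 t"
proof -
  assume tT: "t \<in> T"
  have "((\<lambda>\<eta>. v 0 x \<eta> t) has_real_derivative 0) (at \<eta>)" for \<eta>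
    using smooth_dy[OF sm(2)[of 0] tT, of "[]" x \<eta>] eqv0[OF tT] by simp
  then show ?thesis using DERIV_isconst_all by blast
qed

lemma ode1_field:
  assumes tT: "t \<in> T" and sf: "smooth3 T f" and pf: "\<And>y. f x (y + 2*pi) t = f x y t"
    and d: "\<And>\<eta>. Dy f x \<eta> t = a * cos \<eta> + b * sin \<eta> + c"
  shows "f x y t = a * sin y - b * cos y + (f x 0 t + b)"
proof -
  have "((\<lambda>\<eta>. f x \<eta> t) has_real_derivative (a * cos \<eta> + b * sin \<eta> + c)) (at \<eta>)" for \<eta>
    using smooth_dy[OF sf tT, of "[]" x \<eta>] d[of \<eta>] by simp
  moreover have p0: "f x (2*pi) t = f x 0 t" using pf[of 0] by simp
  ultimately show ?thesis using ode1(2)[where g="\<lambda>\<eta>. f x \<eta> t" and y=y] by blast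
qed

lemma ode2_field:
  assumes tT: "t \<in> T"
    and d: "\<And>\<eta>. Dy (Dy (u j)) x \<eta> t = a * cos \<eta> + b * sin \<eta> + c"
  shows "u j x y t = - a * cos y - b * sin y"
proof -
  have d1: "((\<lambda>\<eta>. u j x \<eta> t) has_real_derivative Dy (u j) x \<eta> t) (at \<eta>)" for \<eta>
    using smooth_dy[OF sm(1)[of j] tT, of "[]" x \<eta>] by simp
  have d2: "((\<lambda>\<eta>. Dy (u j) x \<eta> t) has_real_derivative (a * cos \<eta> + b * sin \<eta> + c)) (at \<eta>)" for \<eta>
    using smooth_dy[OF sm(1)[of j] tT, of "[1]" x \<eta>] d[of \<eta>] by simp
  have "continuous_on {-pi..pi} (\<lambda>\<eta>. u j x \<eta> t)"
    using d1 DERIV_continuous continuous_at_imp_continuous_on by blast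
  then have "(\<lambda>\<eta>. u j x \<eta> t) integrable_on {-pi..pi}" by (rule integrable_continuous_real)
  then have i0: "((\<lambda>\<eta>. u j x \<eta> t) has_integral integral {-pi..pi} (\<lambda>\<eta>. u j x \<eta> t)) {-pi..pi}"
    by (rule integrable_integral)
  have i: "((\<lambda>\<eta>. u j x \<eta> t) has_integral 0) {-pi..pi}"
    using i0 unfolding mean_u[OF tT, of j x] .
  show ?thesis
    by (rule ode2[where g="\<lambda>\<eta>. u j x \<eta> t", OF d1 d2 _ i]) (simp add: per(1)[OF tT])
qed

lemma Dt_v0: "t \<in> T \<Longrightarrow> Dt (v 0) x y t = Dt (v 0) x 0 t"
proof -
  assume tT: "t \<in> T"
  have "((\<lambda>\<tau>. v 0 x 0 \<tau>) has_real_derivative iterD [2] (v 0) x 0 t) (at t)"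
    using smooth_dt[OF sm(2)[of 0] tT, of "[]" x 0] by simp
  then have "((\<lambda>\<tau>. v 0 x y \<tau>) has_real_derivative iterD [2] (v 0) x 0 t) (at t)"
    by (rule has_field_derivative_transform_within_open[OF _ oT tT]) (metis v0c)
  then show ?thesis by (simp add: Dt_def DERIV_imp_deriv)
qed

context
  fixes t assumes tT: "t \<in> T"
begin

definition "aa n \<xi> = iterD (replicate n 0) (v 0) \<xi> 0 t"
definition "bb n \<xi> = iterD (replicate n 0) (v 1) \<xi> 0 t"
definition "cc n \<xi> = iterD (replicate n 0) (v 2) \<xi> 0 t"
definition "dd n \<xi> = iterD (replicate n 0) (v 3) \<xi> 0 t"
definition "pp n \<xi> = iterD (replicate n 0) (p 0) \<xi> 0 t"

lemma aa_d: "(aa n has_real_derivative aa (Suc n) x) (at x within S)"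
  unfolding aa_def[abs_def] using smooth_dx[OF sm(2)[of 0] tT, of "replicate n 0" 0 x] has_field_derivative_at_within by simp
lemma bb_d: "(bb n has_real_derivative bb (Suc n) x) (at x within S)"
  unfolding bb_def[abs_def] using smooth_dx[OF sm(2)[of 1] tT, of "replicate n 0" 0 x] has_field_derivative_at_within by simp
lemma cc_d: "(cc n has_real_derivative cc (Suc n) x) (at x within S)"
  unfolding cc_def[abs_def] using smooth_dx[OF sm(2)[of 2] tT, of "replicate n 0" 0 x] has_field_derivative_at_within by simp
lemma dd_d: "(dd n has_real_derivative dd (Suc n) x) (at x within S)"
  unfolding dd_def[abs_def] using smooth_dx[OF sm(2)[of 3] tT, of "replicate n 0" 0 x] has_field_derivative_at_within by simp
lemma pp_d: "(pp n has_real_derivative pp (Suc n) x) (at x within S)"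
  unfolding pp_def[abs_def] using smooth_dx[OF sm(3)[of 0] tT, of "replicate n 0" 0 x] has_field_derivative_at_within by simp

lemma aa_de:
  "(aa 0 has_real_derivative aa 1 x) (at x within S)"
  "(aa 1 has_real_derivative aa 2 x) (at x within S)"
  "(aa 2 has_real_derivative aa 3 x) (at x within S)"
  "(aa 3 has_real_derivative aa 4 x) (at x within S)"
  "(aa 0 has_real_derivative aa (Suc 0) x) (at x within S)"
  "(aa (Suc 0) has_real_derivative aa 2 x) (at x within S)"
  using aa_d[of 0] aa_d[of 1] aa_d[of 2] aa_d[of 3] by (simp_all add: eval_nat_numeral)
lemma bb_de:
  "(bb 0 has_real_derivative bb 1 x) (at x within S)"
  "(bb 1 has_real_derivative bb 2 x) (at x within S)"
  "(bb 2 has_real_derivative bb 3 x) (at x within S)"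
  "(bb 0 has_real_derivative bb (Suc 0) x) (at x within S)"
  "(bb (Suc 0) has_real_derivative bb 2 x) (at x within S)"
  using bb_d[of 0] bb_d[of 1] bb_d[of 2] by (simp_all add: eval_nat_numeral)
lemma cc_de:
  "(cc 0 has_real_derivative cc 1 x) (at x within S)"
  "(cc 1 has_real_derivative cc 2 x) (at x within S)"
  "(cc 0 has_real_derivative cc (Suc 0) x) (at x within S)"
  "(cc (Suc 0) has_real_derivative cc 2 x) (at x within S)"
  using cc_d[of 0] cc_d[of 1] by (simp_all add: eval_nat_numeral)
lemma dd_de:
  "(dd 0 has_real_derivative dd 1 x) (at x within S)"
  "(dd 0 has_real_derivative dd (Suc 0) x) (at x within S)"
  using dd_d[of 0] by (simp_all add: eval_nat_numeral)
lemma pp_de: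
  "(pp 0 has_real_derivative pp 1 x) (at x within S)"
  "(pp 0 has_real_derivative pp (Suc 0) x) (at x within S)"
  using pp_d[of 0] by (simp_all add: eval_nat_numeral)

lemmas de = aa_de bb_de cc_de dd_de pp_de

lemma F_v0: "v 0 x y t = aa 0 x" using v0c[OF tT, of x y] by (simp add: aa_def)
lemma F_Dyv0: "Dy (v 0) x y t = 0" using eqv0[OF tT] .
lemma F_Dxv0: "Dx (v 0) x y t = aa 1 x"
  by (rule Dx_eq[where F="aa 0"], rule F_v0, auto intro!: derivative_eq_intros de)

lemma F_u0: "u 0 x y t = - sqrt 2 * aa 0 x * cos y"
  using ode2_field[OF tT, of 0 x "sqrt 2 * aa 0 x" 0 0 y] equ0[OF tT] F_v0 by (simp add: algebra_simps)
lemma F_Dyu0: "Dy (u 0) x y t = sqrt 2 * aa 0 x * sin y"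
  by (rule Dy_eq[where F="\<lambda>\<eta>. - sqrt 2 * aa 0 x * cos \<eta>"], rule F_u0, auto intro!: derivative_eq_intros de)
lemma F_Dxu0: "Dx (u 0) x y t = - sqrt 2 * aa 1 x * cos y"
  by (rule Dx_eq[where F="\<lambda>\<xi>. - sqrt 2 * aa 0 \<xi> * cos y"], rule F_u0, auto intro!: derivative_eq_intros de)
lemma F_DxDxu0: "Dx (Dx (u 0)) x y t = - sqrt 2 * aa 2 x * cos y"
  by (rule Dx_eq[where F="\<lambda>\<xi>. - sqrt 2 * aa 1 \<xi> * cos y"], rule F_Dxu0, auto intro!: derivative_eq_intros de)
lemma F_DyDxu0: "Dy (Dx (u 0)) x y t = sqrt 2 * aa 1 x * sin y"
  by (rule Dy_eq[where F="\<lambda>\<eta>. - sqrt 2 * aa 1 x * cos \<eta>"], rule F_Dxu0, auto intro!: derivative_eq_intros de)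

lemma F_Dyv1: "Dy (v 1) x y t = sqrt 2 * aa 1 x * cos y"
  using eqv1[OF tT] F_Dxu0 by simp
lemma F_v1: "v 1 x y t = sqrt 2 * aa 1 x * sin y + bb 0 x"
proof -
  have "Dy (v 1) x \<eta> t = sqrt 2 * aa 1 x * cos \<eta> + 0 * sin \<eta> + 0" for \<eta> using F_Dyv1 by simp
  from ode1_field[OF tT sm(2)[of 1] per(2)[OF tT, of 1 x] this, where y=y] show ?thesis by (simp add: bb_def)
qed
lemma F_Dxv1: "Dx (v 1) x y t = sqrt 2 * aa 2 x * sin y + bb 1 x"
  by (rule Dx_eq[where F="\<lambda>\<xi>. sqrt 2 * aa 1 \<xi> * sin y + bb 0 \<xi>"], rule F_v1, auto intro!: derivative_eq_intros de)

lemma F_p0: "p 0 x y t = 2 * sqrt 2 * aa 1 x * cos y + (pp 0 x - 2 * sqrt 2 * aa 1 x)"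
proof -
  have "Dy (p 0) x \<eta> t = 0 * cos \<eta> + (- 2 * sqrt 2 * aa 1 x) * sin \<eta> + 0" for \<eta>
    using eqp0[OF tT, of x \<eta>] F_DyDxu0 F_Dxv0 F_Dyv0 by simp
  from ode1_field[OF tT sm(3)[of 0] per(3)[OF tT, of 0 x] this, where y=y] show ?thesis by (simp add: pp_def)
qed
lemma F_Dxp0: "Dx (p 0) x y t = 2 * sqrt 2 * aa 2 x * cos y + (pp 1 x - 2 * sqrt 2 * aa 2 x)"
  by (rule Dx_eq[where F="\<lambda>\<xi>. 2 * sqrt 2 * aa 1 \<xi> * cos y + (pp 0 \<xi> - 2 * sqrt 2 * aa 1 \<xi>)"], rule F_p0, auto intro!: derivative_eq_intros de)

lemma s2sq: "sqrt 2 * sqrt 2 = (2::real)" by simp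

lemma F_u1: "u 1 x y t = - sqrt 2 * bb 0 x * cos y - sqrt 2 * (aa 0 x)^2 * sin y"
proof -
  have "Dy (Dy (u 1)) x \<eta> t = (sqrt 2 * bb 0 x) * cos \<eta> + (sqrt 2 * (aa 0 x)^2) * sin \<eta> + 0" for \<eta>
    using equ1[OF tT, of x \<eta>] unfolding F_v1 F_Dxu0 F_v0 F_Dyu0
    using s2sq by (simp add: algebra_simps power2_eq_square)
  from ode2_field[OF tT this] show ?thesis by simp
qed
lemma F_Dxu1: "Dx (u 1) x y t = - sqrt 2 * bb 1 x * cos y - 2 * sqrt 2 * aa 0 x * aa 1 x * sin y"
  by (rule Dx_eq[where F="\<lambda>\<xi>. - sqrt 2 * bb 0 \<xi> * cos y - sqrt 2 * (aa 0 \<xi>)^2 * sin y"], rule F_u1, auto intro!: derivative_eq_intros de)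
lemma F_Dyu1: "Dy (u 1) x y t = sqrt 2 * bb 0 x * sin y - sqrt 2 * (aa 0 x)^2 * cos y"
  by (rule Dy_eq[where F="\<lambda>\<eta>. - sqrt 2 * bb 0 x * cos \<eta> - sqrt 2 * (aa 0 x)^2 * sin \<eta>"], rule F_u1, auto intro!: derivative_eq_intros de)

definition "K2 \<xi> = cc 0 \<xi> + 2 * sqrt 2 * aa 0 \<xi> * aa 1 \<xi>"
definition "K2d \<xi> = cc 1 \<xi> + 2 * sqrt 2 * (aa 1 \<xi> * aa 1 \<xi> + aa 0 \<xi> * aa 2 \<xi>)"
definition "K2dd \<xi> = cc 2 \<xi> + 2 * sqrt 2 * (3 * aa 1 \<xi> * aa 2 \<xi> + aa 0 \<xi> * aa 3 \<xi>)"
definition "CC \<xi> = sqrt 2 * K2 \<xi> - sqrt 2 * aa 0 \<xi> ^ 3 + 3 * sqrt 2 * aa 2 \<xi> + Rb t * aa 0 \<xi>"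
definition "Cd \<xi> = sqrt 2 * K2d \<xi> - 3 * sqrt 2 * aa 0 \<xi> ^ 2 * aa 1 \<xi> + 3 * sqrt 2 * aa 3 \<xi> + Rb t * aa 1 \<xi>"
definition "Cdd \<xi> = sqrt 2 * K2dd \<xi> - 3 * sqrt 2 * (2 * aa 0 \<xi> * aa 1 \<xi> ^ 2 + aa 0 \<xi> ^ 2 * aa 2 \<xi>)
   + 3 * sqrt 2 * aa 4 \<xi> + Rb t * aa 2 \<xi>"
definition "EE \<xi> = aa 1 \<xi> * bb 0 \<xi> + aa 0 \<xi> * bb 1 \<xi>"
definition "Ed \<xi> = aa 2 \<xi> * bb 0 \<xi> + 2 * aa 1 \<xi> * bb 1 \<xi> + aa 0 \<xi> * bb 2 \<xi>"
definition "K3 \<xi> = dd 0 \<xi> + 2 * sqrt 2 * EE \<xi>"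
definition "K3d \<xi> = dd 1 \<xi> + 2 * sqrt 2 * Ed \<xi>"

lemma K2_d: "(K2 has_real_derivative K2d x) (at x within S)"
  unfolding K2_def[abs_def] K2d_def by (auto intro!: derivative_eq_intros de simp: algebra_simps)
lemma K2d_d: "(K2d has_real_derivative K2dd x) (at x within S)"
  unfolding K2d_def[abs_def] K2dd_def by (auto intro!: derivative_eq_intros de simp: algebra_simps)
lemma CC_d: "(CC has_real_derivative Cd x) (at x within S)"
  unfolding CC_def[abs_def] Cd_def by (auto intro!: derivative_eq_intros de K2_d simp: algebra_simps power2_eq_square)
lemma Cd_d: "(Cd has_real_derivative Cdd x) (at x within S)"
  unfolding Cd_def[abs_def] Cdd_def by (auto intro!: derivative_eq_intros de K2d_d simp: algebra_simps power2_eq_square)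
lemma EE_d: "(EE has_real_derivative Ed x) (at x within S)"
  unfolding EE_def[abs_def] Ed_def by (auto intro!: derivative_eq_intros de simp: algebra_simps)
lemma K3_d: "(K3 has_real_derivative K3d x) (at x within S)"
  unfolding K3_def[abs_def] K3d_def by (auto intro!: derivative_eq_intros de EE_d simp: algebra_simps)

lemma de2: "m = K2d x \<Longrightarrow> (K2 has_real_derivative m) (at x within S)"
  "m = K2dd x \<Longrightarrow> (K2d has_real_derivative m) (at x within S)"
  "m = Cd x \<Longrightarrow> (CC has_real_derivative m) (at x within S)"
  "m = Cdd x \<Longrightarrow> (Cd has_real_derivative m) (at x within S)"
  "m = Ed x \<Longrightarrow> (EE has_real_derivative m) (at x within S)"
  "m = K3d x \<Longrightarrow> (K3 has_real_derivative m) (at x within S)"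
  using K2_d K2d_d CC_d Cd_d EE_d K3_d by auto

lemma F_Dyv2: "Dy (v 2) x y t = sqrt 2 * bb 1 x * cos y + 2 * sqrt 2 * aa 0 x * aa 1 x * sin y"
  using eqv2[OF tT] F_Dxu1 by simp
lemma F_v2: "v 2 x y t = sqrt 2 * bb 1 x * sin y - 2 * sqrt 2 * aa 0 x * aa 1 x * cos y + K2 x"
proof -
  have "Dy (v 2) x \<eta> t = sqrt 2 * bb 1 x * cos \<eta> + (2 * sqrt 2 * aa 0 x * aa 1 x) * sin \<eta> + 0" for \<eta>
    using F_Dyv2 by simp
  from ode1_field[OF tT sm(2)[of 2] per(2)[OF tT, of 2 x] this, where y=y] show ?thesis by (simp add: cc_def K2_def)
qed
lemma F_Dxv2: "Dx (v 2) x y t = sqrt 2 * bb 2 x * sin y - 2 * sqrt 2 * (aa 1 x * aa 1 x + aa 0 x * aa 2 x) * cos y + K2d x"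
  by (rule Dx_eq[where F="\<lambda>\<xi>. sqrt 2 * bb 1 \<xi> * sin y - 2 * sqrt 2 * aa 0 \<xi> * aa 1 \<xi> * cos y + K2 \<xi>"], rule F_v2, auto simp: algebra_simps intro!: derivative_eq_intros de de2)
lemma F_DxDxv2: "Dx (Dx (v 2)) x y t = sqrt 2 * bb 3 x * sin y - 2 * sqrt 2 * (3 * aa 1 x * aa 2 x + aa 0 x * aa 3 x) * cos y + K2dd x"
  by (rule Dx_eq[where F="\<lambda>\<xi>. sqrt 2 * bb 2 \<xi> * sin y - 2 * sqrt 2 * (aa 1 \<xi> * aa 1 \<xi> + aa 0 \<xi> * aa 2 \<xi>) * cos y + K2d \<xi>"], rule F_Dxv2, auto simp: algebra_simps numeral_3_eq_3 intro!: derivative_eq_intros de de2)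

lemma F_u2: "u 2 x y t = - CC x * cos y - 2 * sqrt 2 * aa 0 x * bb 0 x * sin y"
proof -
  have "Dy (Dy (u 2)) x \<eta> t = CC x * cos \<eta> + (2 * sqrt 2 * aa 0 x * bb 0 x) * sin \<eta>
      + (pp 1 x - 2 * sqrt 2 * aa 2 x - 2 * aa 0 x * aa 1 x)" for \<eta>
  proof -
    have e: "Dy (Dy (u 2)) x \<eta> t = sqrt 2 * cos \<eta> * (sqrt 2 * bb 1 x * sin \<eta> - 2 * sqrt 2 * aa 0 x * aa 1 x * cos \<eta> + K2 x)
      + sqrt 2 * sin \<eta> * (- sqrt 2 * bb 1 x * cos \<eta> - 2 * sqrt 2 * aa 0 x * aa 1 x * sin \<eta>)
      + (aa 0 x * (sqrt 2 * bb 0 x * sin \<eta> - sqrt 2 * (aa 0 x)^2 * cos \<eta>)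
         + (sqrt 2 * aa 1 x * sin \<eta> + bb 0 x) * (sqrt 2 * aa 0 x * sin \<eta>))
      + (- sqrt 2 * aa 0 x * cos \<eta>) * (- sqrt 2 * aa 1 x * cos \<eta>)
      - (- sqrt 2 * aa 2 x * cos \<eta>)
      + (2 * sqrt 2 * aa 2 x * cos \<eta> + (pp 1 x - 2 * sqrt 2 * aa 2 x))
      + Rb t * aa 0 x * cos \<eta>"
      using equ2[OF tT, of x \<eta>] unfolding F_v2 F_Dxu1 F_v0 F_Dyu1 F_v1 F_Dyu0 F_u0 F_Dxu0 F_DxDxu0 F_Dxp0 .
    show ?thesis unfolding e CC_def
      by (rule u2_alg) (simp, use sin_cos_squared_add[of \<eta>] in \<open>simp add: power2_eq_square\<close>)
  qed
  from ode2_field[OF tT this] show ?thesis by simp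
qed
lemma F_Dxu2: "Dx (u 2) x y t = - Cd x * cos y - 2 * sqrt 2 * EE x * sin y"
  by (rule Dx_eq[where F="\<lambda>\<xi>. - CC \<xi> * cos y - 2 * sqrt 2 * aa 0 \<xi> * bb 0 \<xi> * sin y"], rule F_u2, auto simp: EE_def algebra_simps intro!: derivative_eq_intros de de2)
lemma F_Dyv3: "Dy (v 3) x y t = Cd x * cos y + 2 * sqrt 2 * EE x * sin y"
  using eqv3[OF tT] F_Dxu2 by simp
lemma F_v3: "v 3 x y t = Cd x * sin y - 2 * sqrt 2 * EE x * cos y + K3 x"
proof -
  have "Dy (v 3) x \<eta> t = Cd x * cos \<eta> + (2 * sqrt 2 * EE x) * sin \<eta> + 0" for \<eta>
    using F_Dyv3 by simp
  from ode1_field[OF tT sm(2)[of 3] per(2)[OF tT, of 3 x] this, where y=y] show ?thesis by (simp add: dd_def K3_def)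
qed
lemma F_Dxv3: "Dx (v 3) x y t = Cdd x * sin y - 2 * sqrt 2 * Ed x * cos y + K3d x"
  by (rule Dx_eq[where F="\<lambda>\<xi>. Cd \<xi> * sin y - 2 * sqrt 2 * EE \<xi> * cos y + K3 \<xi>"], rule F_v3, auto simp: algebra_simps intro!: derivative_eq_intros de de2)


lemma trq_const: "trq (\<lambda>y. k)" by (intro trq_trl trl_const)
lemma trq_cos: "trq (\<lambda>y. cos y)" by (intro trq_trl trl_cos)
lemma trq_sin: "trq (\<lambda>y. sin y)" by (intro trq_trl trl_sin)

lemma pressure_cond:
  "Dt (v 0) x 0 t = - (deriv r t / r t) * aa 0 x - 3 * aa 4 x - sqrt 2 * Rb t * aa 2 x
      + 2 / 3 * (6 * aa 0 x * (aa 1 x)^2 + 3 * (aa 0 x)^2 * aa 2 x)"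
proof -
  define R where "R = (\<lambda>\<eta>. - sqrt 2 * sin \<eta> * (Cdd x * sin \<eta> - 2 * sqrt 2 * Ed x * cos \<eta> + K3d x)
 - (aa 0 x * (Cd x * cos \<eta> + 2 * sqrt 2 * EE x * sin \<eta>)
    + (sqrt 2 * aa 1 x * sin \<eta> + bb 0 x) * (sqrt 2 * bb 1 x * cos \<eta> + 2 * sqrt 2 * aa 0 x * aa 1 x * sin \<eta>)
    + (sqrt 2 * bb 1 x * sin \<eta> - 2 * sqrt 2 * aa 0 x * aa 1 x * cos \<eta> + K2 x) * (sqrt 2 * aa 1 x * cos \<eta>)
    + (Cd x * sin \<eta> - 2 * sqrt 2 * EE x * cos \<eta> + K3 x) * 0)
 + (- ((- sqrt 2 * aa 0 x * cos \<eta>) * (sqrt 2 * bb 2 x * sin \<eta> - 2 * sqrt 2 * (aa 1 x * aa 1 x + aa 0 x * aa 2 x) * cos \<eta> + K2d x)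
      + (- sqrt 2 * bb 0 x * cos \<eta> - sqrt 2 * (aa 0 x)^2 * sin \<eta>) * (sqrt 2 * aa 2 x * sin \<eta> + bb 1 x)
      + (- CC x * cos \<eta> - 2 * sqrt 2 * aa 0 x * bb 0 x * sin \<eta>) * aa 1 x)
    + (sqrt 2 * bb 3 x * sin \<eta> - 2 * sqrt 2 * (3 * aa 1 x * aa 2 x + aa 0 x * aa 3 x) * cos \<eta> + K2dd x))
 - Rb t * sin \<eta> * (sqrt 2 * aa 2 x * sin \<eta> + bb 1 x)
 - (Dt (v 0) x 0 t + aa 0 x * (deriv r t / r t)))"
  define q where "q \<eta> = p 3 x \<eta> t + Dx (u 3) x \<eta> t" for \<eta>
  have qd: "(q has_real_derivative (Dy (p 3) x \<eta> t + Dy (Dx (u 3)) x \<eta> t)) (at \<eta>)" for \<eta>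
  proof -
    have a: "((\<lambda>\<eta>. p 3 x \<eta> t) has_real_derivative Dy (p 3) x \<eta> t) (at \<eta>)"
      using smooth_dy[OF sm(3)[of 3] tT, of "[]" x \<eta>] by simp
    have b: "((\<lambda>\<eta>. Dx (u 3) x \<eta> t) has_real_derivative Dy (Dx (u 3)) x \<eta> t) (at \<eta>)"
      using smooth_dy[OF sm(1)[of 3] tT, of "[0]" x \<eta>] by simp
    show ?thesis unfolding q_def[abs_def] by (rule DERIV_add[OF a b])
  qed
  have GR: "Dy (p 3) x \<eta> t + Dy (Dx (u 3)) x \<eta> t = R \<eta>" for \<eta>
    using eqp3[OF tT, of x \<eta>] unfolding R_def F_Dxv3 F_v0 F_Dyv3 F_v1 F_Dyv2 F_v2 F_Dyv1 F_v3 F_Dyv0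
      F_u0 F_Dxv2 F_u1 F_Dxv1 F_u2 F_Dxv0 F_DxDxv2 Dt_v0[OF tT, of x \<eta>]
    by linarith
  have "(R has_integral (q pi - q (-pi))) {-pi..pi}"
    using ftc_real[of "-pi" pi q] qd GR by simp
  moreover have "q pi = q (-pi)"
  proof -
    have e1: "p 3 x pi t = p 3 x (-pi) t" using per(3)[OF tT, of 3 x "-pi"] by simp
    have e2: "u 3 \<xi> pi t = u 3 \<xi> (-pi) t" for \<xi> using per(1)[OF tT, of 3 \<xi> "-pi"] by simp
    show ?thesis unfolding q_def Dx_def using e1 e2 by simp
  qed
  ultimately have i0: "(R has_integral 0) {-pi..pi}" by simp
  have "trq R" unfolding R_def
    by (intro trq_add trq_diff trq_minus trq_cmult trq_mult trq_const trq_cos trq_sin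
          trl_add trl_diff trl_minus trl_cmult trl_multc trl_cos trl_sin trl_const)
  from trq_integral[OF this] i0 have "pi/2 * (R 0 + R pi + R (pi/2) + R (-pi/2)) = 0"
    using has_integral_unique by blast
  then have S: "R 0 + R pi + R (pi/2) + R (-pi/2) = 0" by simp
  have RR: "R \<eta> = Rf (sqrt 2) (aa 0 x) (aa 1 x) (aa 2 x) (aa 3 x) (aa 4 x) (bb 0 x) (bb 1 x) (bb 2 x) (bb 3 x) (cc 0 x) (cc 1 x) (cc 2 x) (dd 0 x) (dd 1 x) (Rb t) (deriv r t / r t) (Dt (v 0) x 0 t) (sin \<eta>) (cos \<eta>)" for \<eta>
    unfolding R_def Rf_def Cdd_def K2dd_def K2d_def K2_def CC_def Cd_def Ed_def EE_def K3d_def K3_def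
    by simp
  have m: "sin (-pi/2) = -1" "cos (-pi/2) = 0"
    by (simp_all add: minus_divide_left[symmetric])
  have S': "Rf (sqrt 2) (aa 0 x) (aa 1 x) (aa 2 x) (aa 3 x) (aa 4 x) (bb 0 x) (bb 1 x) (bb 2 x) (bb 3 x) (cc 0 x) (cc 1 x) (cc 2 x) (dd 0 x) (dd 1 x) (Rb t) (deriv r t / r t) (Dt (v 0) x 0 t) 0 1 + Rf (sqrt 2) (aa 0 x) (aa 1 x) (aa 2 x) (aa 3 x) (aa 4 x) (bb 0 x) (bb 1 x) (bb 2 x) (bb 3 x) (cc 0 x) (cc 1 x) (cc 2 x) (dd 0 x) (dd 1 x) (Rb t) (deriv r t / r t) (Dt (v 0) x 0 t) 0 (-1) + Rf (sqrt 2) (aa 0 x) (aa 1 x) (aa 2 x) (aa 3 x) (aa 4 x) (bb 0 x) (bb 1 x) (bb 2 x) (bb 3 x) (cc 0 x) (cc 1 x) (cc 2 x) (dd 0 x) (dd 1 x) (Rb t) (deriv r t / r t) (Dt (v 0) x 0 t) 1 0 + Rf (sqrt 2) (aa 0 x) (aa 1 x) (aa 2 x) (aa 3 x) (aa 4 x) (bb 0 x) (bb 1 x) (bb 2 x) (bb 3 x) (cc 0 x) (cc 1 x) (cc 2 x) (dd 0 x) (dd 1 x) (Rb t) (deriv r t / r t) (Dt (v 0) x 0 t) (-1) 0 = 0"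
    using S unfolding RR by (simp add: m)
  show ?thesis using final_alg[OF s2sq S'] by simp
qed


lemma funpow2: "(deriv ^^ 2) G = deriv (deriv G)" for G :: "real \<Rightarrow> real"
  by (simp add: numeral_2_eq_2)

lemma main_t:
  "v 0 x y t = v 0 x 0 t"
  "u 0 x y t = - sqrt 2 * cos y * v 0 x 0 t"
  "deriv (\<lambda>\<tau>. v 0 x 0 \<tau>) t =
            - (deriv r t / r t) * v 0 x 0 t
            - 3 * (deriv ^^ 4) (\<lambda>\<xi>. v 0 \<xi> 0 t) x
            - sqrt 2 * Rb t * (deriv ^^ 2) (\<lambda>\<xi>. v 0 \<xi> 0 t) x
            + 2 / 3 * (deriv ^^ 2) (\<lambda>\<xi>. (v 0 \<xi> 0 t) ^ 3) x"
proof -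
  show "v 0 x y t = v 0 x 0 t" by (rule v0c[OF tT])
  show "u 0 x y t = - sqrt 2 * cos y * v 0 x 0 t" using F_u0[of x y] by (simp add: aa_def)
  have a0: "(\<lambda>\<xi>. v 0 \<xi> 0 t) = aa 0" by (simp add: aa_def[abs_def])
  have f4: "(deriv ^^ 4) (\<lambda>\<xi>. v 0 \<xi> 0 t) = aa 4" by (simp only: funpow_deriv aa_def[abs_def])
  have f2: "(deriv ^^ 2) (\<lambda>\<xi>. v 0 \<xi> 0 t) = aa 2" by (simp only: funpow_deriv aa_def[abs_def])
  have c3: "(\<lambda>\<xi>. (v 0 \<xi> 0 t) ^ 3) = (\<lambda>\<xi>. (aa 0 \<xi>) ^ 3)" by (simp add: aa_def)
  have d1: "deriv (\<lambda>\<xi>. (aa 0 \<xi>) ^ 3) = (\<lambda>\<xi>. 3 * (aa 0 \<xi>)^2 * aa 1 \<xi>)"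
  proof
    fix \<xi>
    have "((\<lambda>\<xi>. (aa 0 \<xi>) ^ 3) has_real_derivative 3 * (aa 0 \<xi>)^2 * aa 1 \<xi>) (at \<xi>)"
      by (auto intro!: derivative_eq_intros de simp: algebra_simps power2_eq_square)
    then show "deriv (\<lambda>\<xi>. (aa 0 \<xi>) ^ 3) \<xi> = 3 * (aa 0 \<xi>)^2 * aa 1 \<xi>" by (rule DERIV_imp_deriv)
  qed
  have d2: "deriv (\<lambda>\<xi>. 3 * (aa 0 \<xi>)^2 * aa 1 \<xi>) x = 6 * aa 0 x * (aa 1 x)^2 + 3 * (aa 0 x)^2 * aa 2 x"
  proof -
    have "((\<lambda>\<xi>. 3 * (aa 0 \<xi>)^2 * aa 1 \<xi>) has_real_derivative 6 * aa 0 x * (aa 1 x)^2 + 3 * (aa 0 x)^2 * aa 2 x) (at x)"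
      by (auto intro!: derivative_eq_intros de simp: algebra_simps power2_eq_square)
    then show ?thesis by (rule DERIV_imp_deriv)
  qed
  have f23: "(deriv ^^ 2) (\<lambda>\<xi>. (v 0 \<xi> 0 t) ^ 3) x = 6 * aa 0 x * (aa 1 x)^2 + 3 * (aa 0 x)^2 * aa 2 x"
    unfolding c3 funpow2 d1 d2 ..
  have dt: "deriv (\<lambda>\<tau>. v 0 x 0 \<tau>) t = Dt (v 0) x 0 t" by (simp add: Dt_def)
  show "deriv (\<lambda>\<tau>. v 0 x 0 \<tau>) t =
            - (deriv r t / r t) * v 0 x 0 t
            - 3 * (deriv ^^ 4) (\<lambda>\<xi>. v 0 \<xi> 0 t) x
            - sqrt 2 * Rb t * (deriv ^^ 2) (\<lambda>\<xi>. v 0 \<xi> 0 t) x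
            + 2 / 3 * (deriv ^^ 2) (\<lambda>\<xi>. (v 0 \<xi> 0 t) ^ 3) x"
    unfolding dt f4 f2 f23 pressure_cond by (simp add: aa_def)
qed

end

end

lemma part1:
  assumes oT: "open T" and H: "kf_hierarchy T r Rb eb u v p"
  shows "\<exists>A. leading_order T u v A \<and>
        (\<forall>x. \<forall>t\<in>T. deriv (\<lambda>\<tau>. A x \<tau>) t =
            - (deriv r t / r t) * A x t
            - 3 * (deriv ^^ 4) (\<lambda>\<xi>. A \<xi> t) x
            - sqrt 2 * Rb t * (deriv ^^ 2) (\<lambda>\<xi>. A \<xi> t) x
            + 2 / 3 * (deriv ^^ 2) (\<lambda>\<xi>. (A \<xi> t) ^ 3) x)"
proof (intro exI[of _ "\<lambda>x t. v 0 x 0 t"] conjI)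
  show "leading_order T u v (\<lambda>x t. v 0 x 0 t)"
    unfolding leading_order_def using main_t(1,2)[OF oT H] by blast
  show "\<forall>x. \<forall>t\<in>T. deriv (\<lambda>\<tau>. v 0 x 0 \<tau>) t =
            - (deriv r t / r t) * v 0 x 0 t
            - 3 * (deriv ^^ 4) (\<lambda>\<xi>. v 0 \<xi> 0 t) x
            - sqrt 2 * Rb t * (deriv ^^ 2) (\<lambda>\<xi>. v 0 \<xi> 0 t) x
            + 2 / 3 * (deriv ^^ 2) (\<lambda>\<xi>. (v 0 \<xi> 0 t) ^ 3) x"
    using main_t(3)[OF oT H] by blast
qed

lemma rpos_gen: "kf_hierarchy T r Rb eb u v p \<Longrightarrow> t \<in> T \<Longrightarrow> r t > 0"
  unfolding kf_hierarchy_def by blast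

lemma cont_of_deriv:
  assumes "\<And>t. t \<in> T \<Longrightarrow> (e has_real_derivative e' t) (at t)"
  shows "continuous_on T e"
  using assms DERIV_continuous continuous_at_imp_continuous_on by blast

lemma chart1:
  assumes oT: "open T" and iT: "is_interval T" and z: "0 \<in> T"
    and D: "\<forall>t\<in>T. (r1 has_real_derivative (- 1 / 2 * r1 t * e1 t)) (at t) \<and>
               (e1 has_real_derivative (3 * (e1 t) ^ 2)) (at t)"
    and H: "kf_hierarchy T r1 (\<lambda>_. - 1) e1 u v p"
  shows "(\<forall>t\<in>T. e1 t = 2 * e1 0 / (2 - 6 * e1 0 * t)) \<and>
      (\<exists>A1. leading_order T u v A1 \<and>
        (\<forall>x. \<forall>t\<in>T. deriv (\<lambda>\<tau>. A1 x \<tau>) t =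
            e1 t / 2 * A1 x t
            - 3 * (deriv ^^ 4) (\<lambda>\<xi>. A1 \<xi> t) x
            + sqrt 2 * (deriv ^^ 2) (\<lambda>\<xi>. A1 \<xi> t) x
            + 2 / 3 * (deriv ^^ 2) (\<lambda>\<xi>. (A1 \<xi> t) ^ 3) x))"
proof
  have de: "(e1 has_real_derivative (3 * (e1 t) ^ 2)) (at t)" if "t \<in> T" for t using D that by blast
  have dr: "(r1 has_real_derivative (- 1 / 2 * r1 t * e1 t)) (at t)" if "t \<in> T" for t using D that by blast
  show "\<forall>t\<in>T. e1 t = 2 * e1 0 / (2 - 6 * e1 0 * t)"
  proof
    fix t assume tT: "t \<in> T"
    define w where "w \<tau> = e1 \<tau> * (1 - 3 * e1 0 * \<tau>) - e1 0" for \<tau>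
    have wd: "(w has_real_derivative (3 * e1 \<tau>) * w \<tau>) (at \<tau>)" if "\<tau> \<in> T" for \<tau>
      unfolding w_def[abs_def]
      by (auto intro!: derivative_eq_intros de[OF that] simp: algebra_simps power2_eq_square)
    have kc: "continuous_on T (\<lambda>\<tau>. 3 * e1 \<tau>)"
      using cont_of_deriv[of T e1, OF de] by (intro continuous_intros)
    have w0: "w 0 = 0" by (simp add: w_def)
    have "w t = 0" by (rule ode_zero[OF iT z tT wd kc w0])
    then have e: "e1 t * (1 - 3 * e1 0 * t) = e1 0" by (simp add: w_def)
    have "1 - 3 * e1 0 * t \<noteq> 0"
    proof
      assume "1 - 3 * e1 0 * t = 0"
      with e have "e1 0 = 0" by simp
      with \<open>1 - 3 * e1 0 * t = 0\<close> show False by simp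
    qed
    then show "e1 t = 2 * e1 0 / (2 - 6 * e1 0 * t)" using e by (simp add: field_simps)
  qed
  obtain A where A: "leading_order T u v A"
    "\<forall>x. \<forall>t\<in>T. deriv (\<lambda>\<tau>. A x \<tau>) t =
            - (deriv r1 t / r1 t) * A x t
            - 3 * (deriv ^^ 4) (\<lambda>\<xi>. A \<xi> t) x
            - sqrt 2 * (- 1) * (deriv ^^ 2) (\<lambda>\<xi>. A \<xi> t) x
            + 2 / 3 * (deriv ^^ 2) (\<lambda>\<xi>. (A \<xi> t) ^ 3) x"
    using part1[OF oT H] by blast
  have rho: "deriv r1 t / r1 t = - e1 t / 2" if "t \<in> T" for t
    using DERIV_imp_deriv[OF dr[OF that]] rpos_gen[OF H that] by (simp add: field_simps)
  show "\<exists>A1. leading_order T u v A1 \<and>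
        (\<forall>x. \<forall>t\<in>T. deriv (\<lambda>\<tau>. A1 x \<tau>) t =
            e1 t / 2 * A1 x t
            - 3 * (deriv ^^ 4) (\<lambda>\<xi>. A1 \<xi> t) x
            + sqrt 2 * (deriv ^^ 2) (\<lambda>\<xi>. A1 \<xi> t) x
            + 2 / 3 * (deriv ^^ 2) (\<lambda>\<xi>. (A1 \<xi> t) ^ 3) x)"
    using A rho by (intro exI[of _ A]) auto
qed

lemma chart2:
  assumes oT: "open T" and iT: "is_interval T" and z: "0 \<in> T"
    and D: "\<forall>t\<in>T. (r2 has_real_derivative 0) (at t) \<and>
               (R2 has_real_derivative 1) (at t)"
    and H: "kf_hierarchy T r2 R2 (\<lambda>_. 1) u v p"
  shows "(\<forall>t\<in>T. R2 t = R2 0 + t) \<and>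
      (\<exists>A2. leading_order T u v A2 \<and>
        (\<forall>x. \<forall>t\<in>T. deriv (\<lambda>\<tau>. A2 x \<tau>) t =
            - 3 * (deriv ^^ 4) (\<lambda>\<xi>. A2 \<xi> t) x
            - sqrt 2 * R2 t * (deriv ^^ 2) (\<lambda>\<xi>. A2 \<xi> t) x
            + 2 / 3 * (deriv ^^ 2) (\<lambda>\<xi>. (A2 \<xi> t) ^ 3) x))"
proof
  have de: "(R2 has_real_derivative 1) (at t)" if "t \<in> T" for t using D that by blast
  have dr: "(r2 has_real_derivative 0) (at t)" if "t \<in> T" for t using D that by blast
  show "\<forall>t\<in>T. R2 t = R2 0 + t"
  proof
    fix t assume tT: "t \<in> T"
    define w where "w \<tau> = R2 \<tau> - R2 0 - \<tau>" for \<tau>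
    have wd: "(w has_real_derivative (\<lambda>_. 0) \<tau> * w \<tau>) (at \<tau>)" if "\<tau> \<in> T" for \<tau>
      unfolding w_def[abs_def]
      by (auto intro!: derivative_eq_intros de[OF that])
    have kc: "continuous_on T (\<lambda>_. 0::real)" by (intro continuous_intros)
    have w0: "w 0 = 0" by (simp add: w_def)
    have "w t = 0" by (rule ode_zero[OF iT z tT wd kc w0])
    then show "R2 t = R2 0 + t" by (simp add: w_def)
  qed
  obtain A where A: "leading_order T u v A"
    "\<forall>x. \<forall>t\<in>T. deriv (\<lambda>\<tau>. A x \<tau>) t =
            - (deriv r2 t / r2 t) * A x t
            - 3 * (deriv ^^ 4) (\<lambda>\<xi>. A \<xi> t) x
            - sqrt 2 * R2 t * (deriv ^^ 2) (\<lambda>\<xi>. A \<xi> t) x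
            + 2 / 3 * (deriv ^^ 2) (\<lambda>\<xi>. (A \<xi> t) ^ 3) x"
    using part1[OF oT H] by blast
  have rho: "deriv r2 t = 0" if "t \<in> T" for t
    using DERIV_imp_deriv[OF dr[OF that]] .
  show "\<exists>A2. leading_order T u v A2 \<and>
        (\<forall>x. \<forall>t\<in>T. deriv (\<lambda>\<tau>. A2 x \<tau>) t =
            - 3 * (deriv ^^ 4) (\<lambda>\<xi>. A2 \<xi> t) x
            - sqrt 2 * R2 t * (deriv ^^ 2) (\<lambda>\<xi>. A2 \<xi> t) x
            + 2 / 3 * (deriv ^^ 2) (\<lambda>\<xi>. (A2 \<xi> t) ^ 3) x)"
    using A rho by (intro exI[of _ A]) auto
qed

lemma chart3:
  assumes oT: "open T" and iT: "is_interval T" and z: "0 \<in> T"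
    and D: "\<forall>t\<in>T. (r3 has_real_derivative (1 / 2 * r3 t * e3 t)) (at t) \<and>
               (e3 has_real_derivative (- 3 * (e3 t) ^ 2)) (at t)"
    and H: "kf_hierarchy T r3 (\<lambda>_. 1) e3 u v p"
  shows "(\<forall>t\<in>T. e3 t = 2 * e3 0 / (2 + 6 * e3 0 * t)) \<and>
      (\<exists>A3. leading_order T u v A3 \<and>
        (\<forall>x. \<forall>t\<in>T. deriv (\<lambda>\<tau>. A3 x \<tau>) t =
            - e3 t / 2 * A3 x t
            - 3 * (deriv ^^ 4) (\<lambda>\<xi>. A3 \<xi> t) x
            - sqrt 2 * (deriv ^^ 2) (\<lambda>\<xi>. A3 \<xi> t) x
            + 2 / 3 * (deriv ^^ 2) (\<lambda>\<xi>. (A3 \<xi> t) ^ 3) x))"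
proof
  have de: "(e3 has_real_derivative (- 3 * (e3 t) ^ 2)) (at t)" if "t \<in> T" for t using D that by blast
  have dr: "(r3 has_real_derivative (1 / 2 * r3 t * e3 t)) (at t)" if "t \<in> T" for t using D that by blast
  show "\<forall>t\<in>T. e3 t = 2 * e3 0 / (2 + 6 * e3 0 * t)"
  proof
    fix t assume tT: "t \<in> T"
    define w where "w \<tau> = e3 \<tau> * (1 + 3 * e3 0 * \<tau>) - e3 0" for \<tau>
    have wd: "(w has_real_derivative (- 3 * e3 \<tau>) * w \<tau>) (at \<tau>)" if "\<tau> \<in> T" for \<tau>
      unfolding w_def[abs_def]
      by (auto intro!: derivative_eq_intros de[OF that] simp: algebra_simps power2_eq_square)
    have kc: "continuous_on T (\<lambda>\<tau>. - 3 * e3 \<tau>)"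
      using cont_of_deriv[of T e3, OF de] by (intro continuous_intros)
    have w0: "w 0 = 0" by (simp add: w_def)
    have "w t = 0" by (rule ode_zero[OF iT z tT wd kc w0])
    then have e: "e3 t * (1 + 3 * e3 0 * t) = e3 0" by (simp add: w_def)
    have "1 + 3 * e3 0 * t \<noteq> 0"
    proof
      assume "1 + 3 * e3 0 * t = 0"
      with e have "e3 0 = 0" by simp
      with \<open>1 + 3 * e3 0 * t = 0\<close> show False by simp
    qed
    then show "e3 t = 2 * e3 0 / (2 + 6 * e3 0 * t)" using e by (simp add: field_simps)
  qed
  obtain A where A: "leading_order T u v A"
    "\<forall>x. \<forall>t\<in>T. deriv (\<lambda>\<tau>. A x \<tau>) t =
            - (deriv r3 t / r3 t) * A x t
            - 3 * (deriv ^^ 4) (\<lambda>\<xi>. A \<xi> t) x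
            - sqrt 2 * 1 * (deriv ^^ 2) (\<lambda>\<xi>. A \<xi> t) x
            + 2 / 3 * (deriv ^^ 2) (\<lambda>\<xi>. (A \<xi> t) ^ 3) x"
    using part1[OF oT H] by blast
  have rho: "deriv r3 t / r3 t = e3 t / 2" if "t \<in> T" for t
    using DERIV_imp_deriv[OF dr[OF that]] rpos_gen[OF H that] by (simp add: field_simps)
  show "\<exists>A3. leading_order T u v A3 \<and>
        (\<forall>x. \<forall>t\<in>T. deriv (\<lambda>\<tau>. A3 x \<tau>) t =
            - e3 t / 2 * A3 x t
            - 3 * (deriv ^^ 4) (\<lambda>\<xi>. A3 \<xi> t) x
            - sqrt 2 * (deriv ^^ 2) (\<lambda>\<xi>. A3 \<xi> t) x
            + 2 / 3 * (deriv ^^ 2) (\<lambda>\<xi>. (A3 \<xi> t) ^ 3) x)"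
    using A rho by (intro exI[of _ A]) auto
qed


theorem theorem5p4:
  shows
  "(\<forall>T r Rb eb u v p. open T \<and> kf_hierarchy T r Rb eb u v p \<longrightarrow>
      (\<exists>A. leading_order T u v A \<and>
        (\<forall>x. \<forall>t\<in>T. deriv (\<lambda>\<tau>. A x \<tau>) t =
            - (deriv r t / r t) * A x t
            - 3 * (deriv ^^ 4) (\<lambda>\<xi>. A \<xi> t) x
            - sqrt 2 * Rb t * (deriv ^^ 2) (\<lambda>\<xi>. A \<xi> t) x
            + 2 / 3 * (deriv ^^ 2) (\<lambda>\<xi>. (A \<xi> t) ^ 3) x)))
   \<and>
   (\<forall>T r1 e1 u v p. open T \<and> is_interval T \<and> 0 \<in> T \<and>
      (\<forall>t\<in>T. (r1 has_real_derivative (- 1 / 2 * r1 t * e1 t)) (at t) \<and>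
               (e1 has_real_derivative (3 * (e1 t) ^ 2)) (at t)) \<and>
      kf_hierarchy T r1 (\<lambda>_. - 1) e1 u v p \<longrightarrow>
      (\<forall>t\<in>T. e1 t = 2 * e1 0 / (2 - 6 * e1 0 * t)) \<and>
      (\<exists>A1. leading_order T u v A1 \<and>
        (\<forall>x. \<forall>t\<in>T. deriv (\<lambda>\<tau>. A1 x \<tau>) t =
            e1 t / 2 * A1 x t
            - 3 * (deriv ^^ 4) (\<lambda>\<xi>. A1 \<xi> t) x
            + sqrt 2 * (deriv ^^ 2) (\<lambda>\<xi>. A1 \<xi> t) x
            + 2 / 3 * (deriv ^^ 2) (\<lambda>\<xi>. (A1 \<xi> t) ^ 3) x)))
   \<and>
   (\<forall>T r2 R2 u v p. open T \<and> is_interval T \<and> 0 \<in> T \<and>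
      (\<forall>t\<in>T. (r2 has_real_derivative 0) (at t) \<and>
               (R2 has_real_derivative 1) (at t)) \<and>
      kf_hierarchy T r2 R2 (\<lambda>_. 1) u v p \<longrightarrow>
      (\<forall>t\<in>T. R2 t = R2 0 + t) \<and>
      (\<exists>A2. leading_order T u v A2 \<and>
        (\<forall>x. \<forall>t\<in>T. deriv (\<lambda>\<tau>. A2 x \<tau>) t =
            - 3 * (deriv ^^ 4) (\<lambda>\<xi>. A2 \<xi> t) x
            - sqrt 2 * R2 t * (deriv ^^ 2) (\<lambda>\<xi>. A2 \<xi> t) x
            + 2 / 3 * (deriv ^^ 2) (\<lambda>\<xi>. (A2 \<xi> t) ^ 3) x)))
   \<and>
   (\<forall>T r3 e3 u v p. open T \<and> is_interval T \<and> 0 \<in> T \<and>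
      (\<forall>t\<in>T. (r3 has_real_derivative (1 / 2 * r3 t * e3 t)) (at t) \<and>
               (e3 has_real_derivative (- 3 * (e3 t) ^ 2)) (at t)) \<and>
      kf_hierarchy T r3 (\<lambda>_. 1) e3 u v p \<longrightarrow>
      (\<forall>t\<in>T. e3 t = 2 * e3 0 / (2 + 6 * e3 0 * t)) \<and>
      (\<exists>A3. leading_order T u v A3 \<and>
        (\<forall>x. \<forall>t\<in>T. deriv (\<lambda>\<tau>. A3 x \<tau>) t =
            - e3 t / 2 * A3 x t
            - 3 * (deriv ^^ 4) (\<lambda>\<xi>. A3 \<xi> t) x
            - sqrt 2 * (deriv ^^ 2) (\<lambda>\<xi>. A3 \<xi> t) x
            + 2 / 3 * (deriv ^^ 2) (\<lambda>\<xi>. (A3 \<xi> t) ^ 3) x)))"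
  apply (intro conjI)
  subgoal using part1 by blast
  subgoal using chart1 by blast
  subgoal using chart2 by blast
  subgoal using chart3 by blast
  done

end
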